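(* Let $S$ be a species tree, let $(T,\sigma)$ be a gene tree that is binary (every inner vertex of $T$ other than the planted root $0_T$ has exactly two children), and let $\mu:V(T)\to V(S)\cup E(S)$ be a reconciliation map without horizontal gene transfer satisfying axioms (R0), (R1), (R2), (R3.i), (R3.ii) (but not necessarily (R4)). Let $x,y\in L(T)$ be two genes with $\sigma(x)\neq\sigma(y)$. If $\operatorname{lca}_S(\sigma(x),\sigma(y))\prec_S \mu(\operatorname{lca}_T(x,y))$, then $\operatorname{lca}_T(x,y)$ is a duplication event, i.e., $\mu(\operatorname{lca}_T(x,y))\in E(S)$.
   Context: A planted phylogenetic tree $T$ has a distinguished leaf $0_T$ (the planted root) whose unique neighbour $\rho_T$ is the root; every other non-leaf vertex has at least two children. $L(T)$ denotes the leaves other than $0_T$. For vertices, $a\preceq_T b$ means $b$ lies on the path from $a$ to $0_T$; $\operatorname{lca}_T(A)$ is the $\preceq_T$-minimal vertex that is $\succeq_T$ every element of $A$; $T(v)$ is the subtree rooted at $v$ and $\mathsf{child}(v)$ the set of children of $v$. A species tree $S$ is a planted phylogenetic tree with planted root $0_S$, root $\rho_S$ and leaf set $\mathscr{S}$ (the species); $V^0(S)$ denotes the inner vertices of $S$ (vertices that are neither leaves nor $0_S$). The order $\preceq_S$ is extended to $V(S)\cup E(S)$ by regarding each edge $e=pq$ ($q$ a child of $p$) as lying strictly between $q$ and $p$: $q\prec_S e\prec_S p$, a vertex $w$ satisfies $w\prec_S e$ iff $w\preceq_S q$ and $e\prec_S w$ iff $p\preceq_S w$, and for edges $e=pq$,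 $e'=p'q'$, $e\prec_S e'$ iff $p\preceq_S q'$; $\operatorname{lca}_S$ of elements of $V(S)\cup E(S)$ is the $\preceq_S$-minimal vertex above all of them. A gene tree $(T,\sigma)$ is a planted phylogenetic tree $T$ with a map $\sigma:L(T)\to\mathscr{S}$ assigning to each gene its species. A reconciliation map without horizontal gene transfer is a map $\mu:V(T)\to V(S)\cup E(S)$ satisfying: (R0) $\mu(v)=0_S$ iff $v=0_T$; (R1) $\mu(v)=\sigma(v)$ for $v\in L(T)$; (R2) $v\prec_T w$ implies $\mu(v)\preceq_S\mu(w)$; and for every $v\in V(T)$ with $\mu(v)\in V^0(S)$: (R3.i) $\mu(v)=\operatorname{lca}_S(\mu(v'),\mu(v''))$ for at least two distinct children $v',v''$ of $v$, and (R3.ii) $\mu(v')$ and $\mu(v'')$ are $\preceq_S$-incomparable for any two distinct children $v',v''$ of $v$. A vertex $v$ of $T$ is a speciation if $\mu(v)\in V^0(S)$ and a duplication if $\mu(v)\in E(S)$. *)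

theory Defs
  imports Main
begin

definition children :: "('v \<times> 'v) set \<Rightarrow> 'v \<Rightarrow> 'v set" where
  "children E v = {q. (v, q) \<in> E}"

definition tle :: "('v \<times> 'v) set \<Rightarrow> 'v \<Rightarrow> 'v \<Rightarrow> bool" where
  "tle E a b \<longleftrightarrow> (b, a) \<in> E\<^sup>*"

definition tlt :: "('v \<times> 'v) set \<Rightarrow> 'v \<Rightarrow> 'v \<Rightarrow> bool" where
  "tlt E a b \<longleftrightarrow> tle E a b \<and> a \<noteq> b"

definition planted_phylo_tree :: "'v set \<Rightarrow> ('v \<times> 'v) set \<Rightarrow> 'v \<Rightarrow> bool" where
  "planted_phylo_tree V E r0 \<longleftrightarrow>
     finite V \<and> r0 \<in> V \<and> E \<subseteq> V \<times> V \<and>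
     (\<forall>v. (v, r0) \<notin> E) \<and>
     (\<forall>v\<in>V. v \<noteq> r0 \<longrightarrow> (\<exists>!p. (p, v) \<in> E)) \<and>
     (\<forall>v\<in>V. (r0, v) \<in> E\<^sup>*) \<and>
     card (children E r0) = 1 \<and>
     (\<forall>v\<in>V. v \<noteq> r0 \<and> children E v \<noteq> {} \<longrightarrow> card (children E v) \<ge> 2)"

definition leaves :: "'v set \<Rightarrow> ('v \<times> 'v) set \<Rightarrow> 'v \<Rightarrow> 'v set" where
  "leaves V E r0 = {v \<in> V. v \<noteq> r0 \<and> children E v = {}}"

definition inner :: "'v set \<Rightarrow> ('v \<times> 'v) set \<Rightarrow> 'v \<Rightarrow> 'v set" where
  "inner V E r0 = {v \<in> V. v \<noteq> r0 \<and> children E v \<noteq> {}}"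

definition binary_tree :: "'v set \<Rightarrow> ('v \<times> 'v) set \<Rightarrow> 'v \<Rightarrow> bool" where
  "binary_tree V E r0 \<longleftrightarrow> (\<forall>v \<in> inner V E r0. card (children E v) = 2)"

definition tree_lca :: "'v set \<Rightarrow> ('v \<times> 'v) set \<Rightarrow> 'v set \<Rightarrow> 'v" where
  "tree_lca V E A = (THE w. w \<in> V \<and> (\<forall>a\<in>A. tle E a w) \<and>
       (\<forall>w'\<in>V. (\<forall>a\<in>A. tle E a w') \<longrightarrow> tle E w w'))"

text \<open>Elements of V(S) \<union> E(S): a vertex, or the edge p q (q child of p).\<close>
datatype 'b selem = SV 'b | SE 'b 'b

fun slt :: "('b \<times> 'b) set \<Rightarrow> 'b selem \<Rightarrow> 'b selem \<Rightarrow> bool" where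
  "slt E (SV a) (SV b) = tlt E a b"
| "slt E (SV w) (SE p q) = tle E w q"
| "slt E (SE p q) (SV w) = tle E p w"
| "slt E (SE p q) (SE p' q') = tle E p q'"

definition sle :: "('b \<times> 'b) set \<Rightarrow> 'b selem \<Rightarrow> 'b selem \<Rightarrow> bool" where
  "sle E x y \<longleftrightarrow> slt E x y \<or> x = y"

definition slca :: "'b set \<Rightarrow> ('b \<times> 'b) set \<Rightarrow> 'b selem set \<Rightarrow> 'b" where
  "slca V E A = (THE w. w \<in> V \<and> (\<forall>a\<in>A. sle E a (SV w)) \<and>
       (\<forall>w'\<in>V. (\<forall>a\<in>A. sle E a (SV w')) \<longrightarrow> tle E w w'))"

definition gene_tree :: "'a set \<Rightarrow> ('a \<times> 'a) set \<Rightarrow> 'a \<Rightarrow> ('a \<Rightarrow> 'b)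
     \<Rightarrow> 'b set \<Rightarrow> ('b \<times> 'b) set \<Rightarrow> 'b \<Rightarrow> bool" where
  "gene_tree VT ET rT \<sigma> VS ES rS \<longleftrightarrow> planted_phylo_tree VT ET rT \<and>
     (\<forall>x \<in> leaves VT ET rT. \<sigma> x \<in> leaves VS ES rS)"

definition reconciliation :: "'a set \<Rightarrow> ('a \<times> 'a) set \<Rightarrow> 'a \<Rightarrow> ('a \<Rightarrow> 'b)
     \<Rightarrow> 'b set \<Rightarrow> ('b \<times> 'b) set \<Rightarrow> 'b \<Rightarrow> ('a \<Rightarrow> 'b selem) \<Rightarrow> bool" where
  "reconciliation VT ET rT \<sigma> VS ES rS \<mu> \<longleftrightarrow>
     (\<forall>v\<in>VT. \<mu> v \<in> SV ` VS \<union> (\<lambda>(p,q). SE p q) ` ES) \<and>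
     (\<forall>v\<in>VT. \<mu> v = SV rS \<longleftrightarrow> v = rT) \<and>
     (\<forall>v\<in>leaves VT ET rT. \<mu> v = SV (\<sigma> v)) \<and>
     (\<forall>v\<in>VT. \<forall>w\<in>VT. tlt ET v w \<longrightarrow> sle ES (\<mu> v) (\<mu> w)) \<and>
     (\<forall>v\<in>VT. \<mu> v \<in> SV ` inner VS ES rS \<longrightarrow>
        (\<exists>v'\<in>children ET v. \<exists>v''\<in>children ET v. v' \<noteq> v'' \<and>
            \<mu> v = SV (slca VS ES {\<mu> v', \<mu> v''})) \<and>
        (\<forall>v'\<in>children ET v. \<forall>v''\<in>children ET v. v' \<noteq> v'' \<longrightarrow>
            \<not> sle ES (\<mu> v') (\<mu> v'') \<and> \<not> sle ES (\<mu> v'') (\<mu> v')))"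

end

theory Submission
  imports Defs
begin

lemma pt_parent:
  assumes P: "planted_phylo_tree V E r0" and "(p, v) \<in> E" and "(p', v) \<in> E"
  shows "p = p'"
proof -
  have "v \<in> V" "v \<noteq> r0" "\<exists>!p. (p, v) \<in> E"
    using assms unfolding planted_phylo_tree_def by auto
  then show ?thesis using assms(2,3) by blast
qed

lemma pt_acyc:
  assumes P: "planted_phylo_tree V E r0"
  shows "(a, a) \<notin> E\<^sup>+"
proof
  assume aa: "(a, a) \<in> E\<^sup>+"
  have EV: "E \<subseteq> V \<times> V" and nr: "\<forall>v. (v, r0) \<notin> E" and rr: "\<forall>v\<in>V. (r0, v) \<in> E\<^sup>*"
    using P unfolding planted_phylo_tree_def by auto
  from aa have "a \<in> V" using EV by (auto elim: tranclE)
  then have ra: "(r0, a) \<in> E\<^sup>*" using rr by blast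
  have "\<forall>w. (w,w) \<in> E\<^sup>+ \<longrightarrow> w \<noteq> a" using ra
  proof (induction rule: rtrancl_induct)
    case base
    then show ?case using nr by (auto elim: tranclE)
  next
    case (step u v)
    show ?case
    proof (intro allI impI notI)
      fix w assume ww: "(w, w) \<in> E\<^sup>+" and wv: "w = v"
      from ww wv have "(v, v) \<in> E\<^sup>+" by simp
      then show False
      proof (cases rule: tranclE)
        case base
        then have "v = u" using pt_parent[OF P _ step.hyps(2)] by blast
        then show False using step.IH base by blast
      next
        case (step z)
        then have "z = u" using pt_parent[OF P _ \<open>(u,v) \<in> E\<close>] by blast
        then have "(u, u) \<in> E\<^sup>+" using step \<open>(u,v) \<in> E\<close>
          by (meson trancl_into_trancl2)
        then show False using \<open>\<forall>w. (w, w) \<in> E\<^sup>+ \<longrightarrow> w \<noteq> u\<close> by blast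
      qed
    qed
  qed
  then show False using aa by blast
qed

lemma pt_antisym:
  assumes P: "planted_phylo_tree V E r0" and "(a, b) \<in> E\<^sup>*" and "(b, a) \<in> E\<^sup>*"
  shows "a = b"
proof (rule ccontr)
  assume "a \<noteq> b"
  then have "(a, b) \<in> E\<^sup>+" using assms(2) by (meson rtranclD)
  then have "(a, a) \<in> E\<^sup>+" using assms(3) by (meson rtrancl_into_trancl1 trancl_rtrancl_trancl)
  then show False using pt_acyc[OF P] by blast
qed

lemma pt_chain:
  assumes P: "planted_phylo_tree V E r0" and "(b, a) \<in> E\<^sup>*" and "(c, a) \<in> E\<^sup>*"
  shows "(b, c) \<in> E\<^sup>* \<or> (c, b) \<in> E\<^sup>*"
  using assms(2,3)
proof (induction arbitrary: c rule: rtrancl_induct)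
  case base
  then show ?case by blast
next
  case (step a' a)
  show ?case
  proof (cases "c = a")
    case True
    then show ?thesis using step by (meson rtrancl.rtrancl_into_rtrancl)
  next
    case False
    from step.prems False obtain a'' where "(c, a'') \<in> E\<^sup>*" "(a'', a) \<in> E"
      by (meson rtranclE)
    then have "a'' = a'" using pt_parent[OF P _ step.hyps(2)] by blast
    then show ?thesis using step.IH \<open>(c, a'') \<in> E\<^sup>*\<close> by blast
  qed
qed

lemma pt_lca:
  assumes P: "planted_phylo_tree V E r0" and A: "A \<subseteq> V" "A \<noteq> {}"
  shows "tree_lca V E A \<in> V \<and> (\<forall>a\<in>A. tle E a (tree_lca V E A)) \<and>
       (\<forall>w'\<in>V. (\<forall>a\<in>A. tle E a w') \<longrightarrow> tle E (tree_lca V E A) w')"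
proof -
  have EV: "E \<subseteq> V \<times> V" and fin: "finite V" and rr: "\<forall>v\<in>V. (r0, v) \<in> E\<^sup>*" and r0V: "r0 \<in> V"
    using P unfolding planted_phylo_tree_def by auto
  define Q where "Q = {w \<in> V. \<forall>a\<in>A. tle E a w}"
  have r0Q: "r0 \<in> Q" using A rr r0V unfolding Q_def tle_def by blast
  have finE: "finite (E\<inverse>)" using EV fin by (meson finite_SigmaI finite_converse finite_subset)
  have acE: "acyclic (E\<inverse>)" using pt_acyc[OF P] unfolding acyclic_def
    by (metis acyclic_converse acyclic_def)
  have wfE: "wf ((E\<inverse>)\<^sup>+)" using finite_acyclic_wf[OF finE acE] by (rule wf_trancl)
  obtain z where zQ: "z \<in> Q" and zmin: "\<forall>y. (y, z) \<in> (E\<inverse>)\<^sup>+ \<longrightarrow> y \<notin> Q"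
    using wfE r0Q unfolding wf_eq_minimal by blast
  obtain a0 where a0: "a0 \<in> A" using A by blast
  have zspec: "z \<in> V \<and> (\<forall>a\<in>A. tle E a z) \<and> (\<forall>w'\<in>V. (\<forall>a\<in>A. tle E a w') \<longrightarrow> tle E z w')"
  proof (intro conjI ballI impI)
    show "z \<in> V" using zQ Q_def by blast
    fix a assume "a \<in> A" then show "tle E a z" using zQ Q_def by blast
  next
    fix w' assume w'V: "w' \<in> V" and ww: "\<forall>a\<in>A. tle E a w'"
    then have w'Q: "w' \<in> Q" unfolding Q_def by blast
    have "(z, a0) \<in> E\<^sup>*" "(w', a0) \<in> E\<^sup>*" using zQ w'Q a0 unfolding Q_def tle_def by auto
    then have "(z, w') \<in> E\<^sup>* \<or> (w', z) \<in> E\<^sup>*" using pt_chain[OF P] by blast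
    then show "tle E z w'"
    proof
      assume "(z, w') \<in> E\<^sup>*"
      show ?thesis
      proof (cases "z = w'")
        case True then show ?thesis unfolding tle_def by simp
      next
        case False
        then have "(z, w') \<in> E\<^sup>+" using \<open>(z, w') \<in> E\<^sup>*\<close> by (meson rtranclD)
        then have "(w', z) \<in> (E\<inverse>)\<^sup>+" by (simp add: trancl_converse)
        then show ?thesis using zmin w'Q by blast
      qed
    qed (simp add: tle_def)
  qed
  have uniq: "w = z" if "w \<in> V \<and> (\<forall>a\<in>A. tle E a w) \<and> (\<forall>w'\<in>V. (\<forall>a\<in>A. tle E a w') \<longrightarrow> tle E w w')" for w
  proof -
    have "tle E w z" "tle E z w" using that zspec by auto
    then show ?thesis using pt_antisym[OF P] unfolding tle_def by blast
  qed
  have "tree_lca V E A = z" unfolding tree_lca_def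
    by (rule the_equality) (use zspec uniq in blast)+
  then show ?thesis using zspec by simp
qed

fun top :: "'b selem \<Rightarrow> 'b" where
  "top (SV a) = a" | "top (SE p q) = p"

lemma sle_SV: "sle E e (SV w) \<longleftrightarrow> tle E (top e) w"
  by (cases e) (auto simp: sle_def tlt_def tle_def)

lemma slca_eq: "slca V E A = tree_lca V E (top ` A)"
  unfolding slca_def tree_lca_def sle_SV by simp

lemma pt_par_above:
  assumes P: "planted_phylo_tree V E r0" and "(p', q') \<in> E" and "tle E q' p" and "q' \<noteq> p"
  shows "tle E p' p"
proof -
  from assms(3,4) obtain r where "(p, r) \<in> E\<^sup>*" "(r, q') \<in> E"
    unfolding tle_def by (metis rtranclE)
  then show ?thesis using pt_parent[OF P assms(2)] unfolding tle_def by blast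
qed

definition valid :: "'b set \<Rightarrow> ('b \<times> 'b) set \<Rightarrow> 'b selem \<Rightarrow> bool" where
  "valid V E e \<longleftrightarrow> (\<exists>p\<in>V. e = SV p) \<or> (\<exists>p q. (p, q) \<in> E \<and> e = SE p q)"

lemma sle_top:
  assumes "valid V E e" "sle E (SV u) e"
  shows "tle E u (top e)"
  using assms unfolding valid_def
  by (auto simp: sle_def tle_def tlt_def intro: converse_rtrancl_into_rtrancl)

lemma L2:
  assumes P: "planted_phylo_tree V E r0" and v: "valid V E a"
    and a1: "sle E (SV u1) a" and "tle E u1 s" "tle E u2 s" and st: "tle E s (top a)" "s \<noteq> top a"
  shows "sle E (SV u2) a"
proof -
  from v consider (V) p where "a = SV p" | (E) p q where "(p, q) \<in> E" "a = SE p q"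
    unfolding valid_def by blast
  then show ?thesis
  proof cases
    case V
    have "tle E u2 p" using assms V unfolding tle_def by (auto intro: rtrancl_trans)
    then show ?thesis using V sle_SV by (metis top.simps(1))
  next
    case (E p q)
    have "tle E u1 q" using a1 E unfolding sle_def by auto
    then have "tle E s q \<or> tle E q s" using pt_chain[OF P] assms(4) unfolding tle_def by blast
    then show ?thesis
    proof
      assume "tle E s q"
      then show ?thesis using E assms(5) unfolding sle_def by (auto simp: tle_def intro: rtrancl_trans)
    next
      assume qs: "tle E q s"
      show ?thesis
      proof (cases "q = s")
        case True
        then show ?thesis using E assms(5) unfolding sle_def by auto
      next
        case False
        then have "tle E p s" using pt_par_above[OF P E(1) qs] by blast
        then have "p = s" using st E pt_antisym[OF P] unfolding tle_def by auto
        then show ?thesis using st E by simp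
      qed
    qed
  qed
qed

lemma L3:
  assumes P: "planted_phylo_tree V E r0" and va: "valid V E a" and vb: "valid V E b"
    and "sle E (SV u) a" "sle E (SV u) b"
  shows "sle E a b \<or> sle E b a"
proof -
  have key: "sle E (SV p) (SE p' q') \<or> sle E (SE p' q') (SV p)"
    if "tle E u p" "tle E u q'" "(p', q') \<in> E" for p p' q'
  proof -
    have "tle E p q' \<or> tle E q' p" using pt_chain[OF P] that unfolding tle_def by blast
    then show ?thesis
    proof
      assume "tle E q' p"
      show ?thesis
      proof (cases "q' = p")
        case True then show ?thesis by (simp add: sle_def tle_def)
      next
        case False then show ?thesis using pt_par_above[OF P that(3) \<open>tle E q' p\<close>] by (simp add: sle_def)
      qed
    qed (simp add: sle_def)
  qed
  have key2: "sle E (SE p q) (SE p' q') \<or> sle E (SE p' q') (SE p q)"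
    if "tle E u q" "tle E u q'" "(p', q') \<in> E" "(p, q) \<in> E" for p q p' q'
  proof -
    have "tle E q q' \<or> tle E q' q" using pt_chain[OF P] that unfolding tle_def by blast
    then show ?thesis
    proof
      assume h: "tle E q q'"
      show ?thesis
      proof (cases "q = q'")
        case True then show ?thesis using pt_parent[OF P that(3)] that(4) by (simp add: sle_def)
      next
        case False then show ?thesis using pt_par_above[OF P that(4) h] by (simp add: sle_def)
      qed
    next
      assume h: "tle E q' q"
      show ?thesis
      proof (cases "q = q'")
        case True then show ?thesis using pt_parent[OF P that(3)] that(4) by (simp add: sle_def)
      next
        case False then show ?thesis using pt_par_above[OF P that(3) h] by (simp add: sle_def)
      qed
    qed
  qed
  from va consider (V) p where "a = SV p" | (E) p q where "(p, q) \<in> E" "a = SE p q"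
    unfolding valid_def by blast
  then show ?thesis
  proof cases
    case V
    from vb consider (V') p' where "b = SV p'" | (E') p' q' where "(p', q') \<in> E" "b = SE p' q'"
      unfolding valid_def by blast
    then show ?thesis
    proof cases
      case V'
      have "tle E u p" "tle E u p'" using assms(4,5) V V' by (auto simp: sle_def tlt_def tle_def)
      then have "tle E p p' \<or> tle E p' p" using pt_chain[OF P] unfolding tle_def by blast
      then show ?thesis using V V' by (auto simp: sle_def tlt_def)
    next
      case E'
      have "tle E u p" "tle E u q'" using assms(4,5) V E' by (auto simp: sle_def tlt_def tle_def)
      then show ?thesis using key E' V by auto
    qed
  next
    case E
    from vb consider (V') p' where "b = SV p'" | (E') p' q' where "(p', q') \<in> E" "b = SE p' q'"
      unfolding valid_def by blast
    then show ?thesis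
    proof cases
      case V'
      have "tle E u p'" "tle E u q" using assms(4,5) V' E by (auto simp: sle_def tlt_def tle_def)
      then show ?thesis using key[where p=p' and p'=p and q'=q] E V' by auto
    next
      case E'
      have "tle E u q" "tle E u q'" using assms(4,5) E' E by (auto simp: sle_def tlt_def tle_def)
      then show ?thesis using key2 E' E by auto
    qed
  qed
qed

theorem lemma2:
  fixes VT :: "'a set" and ET :: "('a \<times> 'a) set" and rT :: 'a
    and VS :: "'b set" and ES :: "('b \<times> 'b) set" and rS :: 'b
    and \<sigma> :: "'a \<Rightarrow> 'b" and \<mu> :: "'a \<Rightarrow> 'b selem"
  assumes S: "planted_phylo_tree VS ES rS"
    and T: "gene_tree VT ET rT \<sigma> VS ES rS"
    and bin: "binary_tree VT ET rT"
    and rec: "reconciliation VT ET rT \<sigma> VS ES rS \<mu>"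
    and x: "x \<in> leaves VT ET rT" and y: "y \<in> leaves VT ET rT"
    and sxy: "\<sigma> x \<noteq> \<sigma> y"
    and lt: "slt ES (SV (slca VS ES {SV (\<sigma> x), SV (\<sigma> y)})) (\<mu> (tree_lca VT ET {x, y}))"
  shows "\<exists>p q. (p, q) \<in> ES \<and> \<mu> (tree_lca VT ET {x, y}) = SE p q"
proof (rule ccontr)
  assume nt: "\<not> ?thesis"
  have PT: "planted_phylo_tree VT ET rT" and lS: "\<forall>x \<in> leaves VT ET rT. \<sigma> x \<in> leaves VS ES rS"
    using T unfolding gene_tree_def by auto
  have ETV: "ET \<subseteq> VT \<times> VT" and ch1: "card (children ET rT) = 1"
    using PT unfolding planted_phylo_tree_def by auto
  have ESV: "ES \<subseteq> VS \<times> VS" using S unfolding planted_phylo_tree_def by auto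
  have rdom: "\<forall>v\<in>VT. \<mu> v \<in> SV ` VS \<union> (\<lambda>(p,q). SE p q) ` ES"
    and r0: "\<forall>v\<in>VT. \<mu> v = SV rS \<longleftrightarrow> v = rT"
    and r1: "\<forall>v\<in>leaves VT ET rT. \<mu> v = SV (\<sigma> v)"
    and r2: "\<forall>v\<in>VT. \<forall>w\<in>VT. tlt ET v w \<longrightarrow> sle ES (\<mu> v) (\<mu> w)"
    and r3: "\<forall>v\<in>VT. \<mu> v \<in> SV ` inner VS ES rS \<longrightarrow>
        (\<exists>v'\<in>children ET v. \<exists>v''\<in>children ET v. v' \<noteq> v'' \<and>
            \<mu> v = SV (slca VS ES {\<mu> v', \<mu> v''})) \<and>
        (\<forall>v'\<in>children ET v. \<forall>v''\<in>children ET v. v' \<noteq> v'' \<longrightarrow>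
            \<not> sle ES (\<mu> v') (\<mu> v'') \<and> \<not> sle ES (\<mu> v'') (\<mu> v'))"
    using rec unfolding reconciliation_def by blast+
  have xy: "x \<noteq> y" using sxy by blast
  have xV: "x \<in> VT" and xc: "children ET x = {}" using x unfolding leaves_def by auto
  have yV: "y \<in> VT" and yc: "children ET y = {}" using y unfolding leaves_def by auto
  define v where "v = tree_lca VT ET {x, y}"
  have vspec: "v \<in> VT \<and> (\<forall>a\<in>{x,y}. tle ET a v) \<and>
       (\<forall>w'\<in>VT. (\<forall>a\<in>{x,y}. tle ET a w') \<longrightarrow> tle ET v w')"
    unfolding v_def by (rule pt_lca[OF PT]) (use xV yV in auto)
  have vV: "v \<in> VT" and vx: "(v, x) \<in> ET\<^sup>*" and vy: "(v, y) \<in> ET\<^sup>*"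
    using vspec unfolding tle_def by auto
  have xnv: "x \<noteq> v"
  proof
    assume "x = v"
    then have "(x, y) \<in> ET\<^sup>*" using vy by simp
    then obtain z where "(x, z) \<in> ET" using xy by (metis converse_rtranclE)
    then show False using xc unfolding children_def by blast
  qed
  have ynv: "y \<noteq> v"
  proof
    assume "y = v"
    then have "(y, x) \<in> ET\<^sup>*" using vx by simp
    then obtain z where "(y, z) \<in> ET" using xy by (metis converse_rtranclE)
    then show False using yc unfolding children_def by blast
  qed
  obtain c where vc: "(v, c) \<in> ET" and cx: "(c, x) \<in> ET\<^sup>*"
    using vx xnv by (metis converse_rtranclE)
  obtain c' where vc': "(v, c') \<in> ET" and cy: "(c', y) \<in> ET\<^sup>*"
    using vy ynv by (metis converse_rtranclE)
  have cV: "c \<in> VT" "c' \<in> VT" using vc vc' ETV by auto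
  have cc: "c \<noteq> c'"
  proof
    assume "c = c'"
    then have "tle ET v c" using vspec cV cx cy unfolding tle_def by auto
    then have "(v, v) \<in> ET\<^sup>+" using vc unfolding tle_def
      by (meson rtrancl_into_trancl2)
    then show False using pt_acyc[OF PT] by blast
  qed
  have cch: "c \<in> children ET v" "c' \<in> children ET v" using vc vc' unfolding children_def by auto
  have vnr: "v \<noteq> rT"
  proof
    assume "v = rT"
    then obtain z where "children ET v = {z}" using ch1 by (metis card_1_singletonE)
    then show False using cch cc by auto
  qed
  have vinner: "v \<in> inner VT ET rT" using vV vnr cch unfolding inner_def by auto
  have card2: "card (children ET v) = 2" using bin vinner unfolding binary_tree_def by blast
  then have finch: "finite (children ET v)" by (metis card.infinite zero_neq_numeral)
  have "\<mu> v \<in> SV ` VS \<union> (\<lambda>(p,q). SE p q) ` ES" using rdom vV by blast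
  moreover have "\<mu> v \<notin> (\<lambda>(p,q). SE p q) ` ES" using nt unfolding v_def by auto
  ultimately obtain w where w: "w \<in> VS" "\<mu> v = SV w" by blast
  have wnr: "w \<noteq> rS" using r0 vV vnr w by auto
  have sxV: "\<sigma> x \<in> VS" "\<sigma> y \<in> VS" using lS x y unfolding leaves_def by auto
  define s where "s = slca VS ES {SV (\<sigma> x), SV (\<sigma> y)}"
  have s_eq: "s = tree_lca VS ES {\<sigma> x, \<sigma> y}" unfolding s_def slca_eq by simp
  have sspec: "s \<in> VS \<and> (\<forall>a\<in>{\<sigma> x, \<sigma> y}. tle ES a s) \<and>
       (\<forall>w'\<in>VS. (\<forall>a\<in>{\<sigma> x, \<sigma> y}. tle ES a w') \<longrightarrow> tle ES s w')"
    unfolding s_eq by (rule pt_lca[OF S]) (use sxV in auto)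
  have sw: "tle ES s w" "s \<noteq> w" using lt w unfolding v_def[symmetric] s_def[symmetric]
    by (auto simp: tlt_def)
  then obtain d where "(w, d) \<in> ES" unfolding tle_def by (metis converse_rtranclE)
  then have winner: "w \<in> inner VS ES rS" using w wnr unfolding inner_def children_def by auto
  then have "\<mu> v \<in> SV ` inner VS ES rS" using w by auto
  then obtain v' v'' where v'ch: "v' \<in> children ET v" "v'' \<in> children ET v" "v' \<noteq> v''"
     and wv: "\<mu> v = SV (slca VS ES {\<mu> v', \<mu> v''})"
     and inc: "\<forall>v'\<in>children ET v. \<forall>v''\<in>children ET v. v' \<noteq> v'' \<longrightarrow>
            \<not> sle ES (\<mu> v') (\<mu> v'') \<and> \<not> sle ES (\<mu> v'') (\<mu> v')"
    using r3 vV by blast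
  have e1: "{v', v''} = children ET v"
    by (rule card_subset_eq[OF finch]) (use v'ch card2 in auto)
  have e2: "{c, c'} = children ET v"
    by (rule card_subset_eq[OF finch]) (use cch cc card2 in auto)
  have "{\<mu> v', \<mu> v''} = {\<mu> c, \<mu> c'}" using e1 e2
    by (metis image_empty image_insert)
  then have wdef: "w = slca VS ES {\<mu> c, \<mu> c'}" using wv w by simp
  define a where "a = \<mu> c"
  define b where "b = \<mu> c'"
  have nab: "\<not> sle ES a b" "\<not> sle ES b a" using inc cch cc unfolding a_def b_def by blast+
  have va: "valid VS ES a" "valid VS ES b"
    using rdom cV unfolding a_def b_def valid_def by auto
  have topV: "top a \<in> VS" "top b \<in> VS" using va ESV unfolding valid_def by auto
  have w_eq: "w = tree_lca VS ES {top a, top b}" unfolding wdef slca_eq a_def b_def by simp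
  have wspec: "w \<in> VS \<and> (\<forall>e\<in>{top a, top b}. tle ES e w) \<and>
       (\<forall>w'\<in>VS. (\<forall>e\<in>{top a, top b}. tle ES e w') \<longrightarrow> tle ES w w')"
    unfolding w_eq by (rule pt_lca[OF S]) (use topV in auto)
  have sa: "sle ES (SV (\<sigma> x)) a"
  proof (cases "x = c")
    case True then show ?thesis using r1 x unfolding a_def sle_def by auto
  next
    case False
    then have "tlt ET x c" using cx unfolding tlt_def tle_def by auto
    then show ?thesis using r2 xV cV r1 x unfolding a_def by metis
  qed
  have sb: "sle ES (SV (\<sigma> y)) b"
  proof (cases "y = c'")
    case True then show ?thesis using r1 y unfolding b_def sle_def by auto
  next
    case False
    then have "tlt ET y c'" using cy unfolding tlt_def tle_def by auto
    then show ?thesis using r2 yV cV r1 y unfolding b_def by metis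
  qed
  have ta: "tle ES (\<sigma> x) (top a)" using sle_top[OF va(1) sa] .
  have tb: "tle ES (\<sigma> y) (top b)" using sle_top[OF va(2) sb] .
  have sx: "tle ES (\<sigma> x) s" "tle ES (\<sigma> y) s" using sspec by auto
  consider "tle ES (top a) s \<and> tle ES (top b) s" | "\<not> tle ES (top a) s" | "\<not> tle ES (top b) s"
    by blast
  then show False
  proof cases
    case 1
    then have "tle ES w s" using wspec sspec by blast
    then show False using sw pt_antisym[OF S] unfolding tle_def by blast
  next
    case 2
    have "tle ES (top a) s \<or> tle ES s (top a)" using pt_chain[OF S] ta sx unfolding tle_def by blast
    then have h: "tle ES s (top a)" "s \<noteq> top a" using 2 by (auto simp: tle_def)
    have say: "sle ES (SV (\<sigma> y)) a" by (rule L2[OF S va(1) sa sx(1) sx(2) h])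
    then show False using L3[OF S va say sb] nab by blast
  next
    case 3
    have "tle ES (top b) s \<or> tle ES s (top b)" using pt_chain[OF S] tb sx unfolding tle_def by blast
    then have h: "tle ES s (top b)" "s \<noteq> top b" using 3 by (auto simp: tle_def)
    have sbx: "sle ES (SV (\<sigma> x)) b" by (rule L2[OF S va(2) sb sx(2) sx(1) h])
    then show False using L3[OF S va sa sbx] nab by blast
  qed
qed

end
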